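(* Let $\mathcal{D}$ be a distribution over pairs $(x,y)$ with $x \in \mathbb{R}^n$ and $y \in [C]$, let $d(\cdot,\cdot)$ be an arbitrary metric on $\mathbb{R}^n$, and let $\epsilon > 0$. Let $f_{\mathrm{det}}: \mathbb{R}^n \to [C] \cup \{\bot\}$ be a detector with risk $R(f_{\mathrm{det}}) = \alpha$ and robust risk with detection $R^{\epsilon}_{\mathrm{adv\text{-}det}}(f_{\mathrm{det}}) = \beta$. Define a classifier $f_{\mathrm{clf}}$ on an input $\hat{x} \in \mathbb{R}^n$ as follows: if $f_{\mathrm{det}}(\hat{x}) \neq \bot$, output $f_{\mathrm{det}}(\hat{x})$; otherwise, if there exists $x'$ with $d(\hat{x}, x') \le \epsilon/2$ and $f_{\mathrm{det}}(x') \neq \bot$, output $f_{\mathrm{det}}(x')$ for such an $x'$; otherwise output a uniformly random label in $[C]$. Then $R(f_{\mathrm{clf}}) \le \alpha$ and $R^{\epsilon/2}_{\mathrm{adv}}(f_{\mathrm{clf}}) \le \beta$.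
   Context: A classifier is a function $f_{\mathrm{clf}}: \mathbb{R}^n \to [C]$; a detector is a function $f_{\mathrm{det}}: \mathbb{R}^n \to [C] \cup \{\bot\}$, where $\bot$ denotes rejection. For $f$ either a classifier or a detector, the risk is $R(f) = \mathbb{E}_{(x,y)\sim\mathcal{D}}[\mathbb{1}\{f(x) \neq y\}]$ (for a detector, outputting $\bot$ on a clean sample counts as an error). The robust risk of a classifier at distance $\epsilon$ is $R^{\epsilon}_{\mathrm{adv}}(f_{\mathrm{clf}}) = \mathbb{E}_{(x,y)\sim\mathcal{D}}[\max_{d(x,\hat{x}) \le \epsilon} \mathbb{1}\{f_{\mathrm{clf}}(\hat{x}) \neq y\}]$. The robust risk with detection of a detector at distance $\epsilon$ is $R^{\epsilon}_{\mathrm{adv\text{-}det}}(f_{\mathrm{det}}) = \mathbb{E}_{(x,y)\sim\mathcal{D}}[\max_{d(x,\hat{x}) \le \epsilon} \mathbb{1}\{f_{\mathrm{det}}(x) \neq y \ \lor\ f_{\mathrm{det}}(\hat{x}) \notin \{y, \bot\}\}]$. Detectors are assumed deterministic. The random label output by $f_{\mathrm{clf}}$ in the last case may be counted as an error in the risk bounds. *)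

theory Defs
  imports "HOL-Probability.Probability"
begin

(* Labels: nat, with [C] = {1..C}.
   Detector: 'x => nat option, None is the rejection symbol \<bottom>. *)

definition risk_clf :: "('x \<times> nat) measure \<Rightarrow> ('x \<Rightarrow> nat) \<Rightarrow> ennreal" where
  "risk_clf D f = (\<integral>\<^sup>+ z. indicator {(x, y). f x \<noteq> y} z \<partial>D)"

definition risk_det :: "('x \<times> nat) measure \<Rightarrow> ('x \<Rightarrow> nat option) \<Rightarrow> ennreal" where
  "risk_det D f = (\<integral>\<^sup>+ z. indicator {(x, y). f x \<noteq> Some y} z \<partial>D)"

definition adv_risk_clf ::
  "('x \<times> nat) measure \<Rightarrow> ('x \<Rightarrow> 'x \<Rightarrow> real) \<Rightarrow> real \<Rightarrow> ('x \<Rightarrow> nat) \<Rightarrow> ennreal" where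
  "adv_risk_clf D d eps f =
     (\<integral>\<^sup>+ z. indicator {(x, y). \<exists>xh. d x xh \<le> eps \<and> f xh \<noteq> y} z \<partial>D)"

definition adv_det_risk ::
  "('x \<times> nat) measure \<Rightarrow> ('x \<Rightarrow> 'x \<Rightarrow> real) \<Rightarrow> real \<Rightarrow> ('x \<Rightarrow> nat option) \<Rightarrow> ennreal" where
  "adv_det_risk D d eps f =
     (\<integral>\<^sup>+ z. indicator {(x, y). \<exists>xh. d x xh \<le> eps \<and>
                              (f x \<noteq> Some y \<or> f xh \<notin> {Some y, None})} z \<partial>D)"

(* The classifier built from the detector.  g is the choice of "such an x'";
   r is the realisation of the uniformly random label in [C]. *)
definition clf_of_det ::
  "('x \<Rightarrow> 'x \<Rightarrow> real) \<Rightarrow> real \<Rightarrow> ('x \<Rightarrow> nat option) \<Rightarrow> ('x \<Rightarrow> 'x) \<Rightarrow> nat \<Rightarrow> 'x \<Rightarrow> nat" where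
  "clf_of_det d eps f g r xh =
     (case f xh of
        Some c \<Rightarrow> c
      | None \<Rightarrow> (if \<exists>x'. d xh x' \<le> eps / 2 \<and> f x' \<noteq> None then the (f (g xh)) else r))"

end

theory Submission
  imports Defs
begin

theorem theorem1:
  fixes D :: "((real ^ ('n::finite)) \<times> nat) measure"
    and d :: "real ^ 'n \<Rightarrow> real ^ 'n \<Rightarrow> real"
    and C :: nat and eps :: real and alpha beta :: ennreal
    and f_det :: "real ^ 'n \<Rightarrow> nat option"
    and g :: "real ^ 'n \<Rightarrow> real ^ 'n"
  assumes "prob_space D"
    and "AE z in D. snd z \<in> {1..C}"
    and "C \<ge> 1"
    and "Metric_space UNIV d"
    and "eps > 0"
    and "\<And>x. f_det x \<in> Some ` {1..C} \<union> {None}"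
    and "\<And>xh. (\<exists>x'. d xh x' \<le> eps / 2 \<and> f_det x' \<noteq> None) \<Longrightarrow>
               d xh (g xh) \<le> eps / 2 \<and> f_det (g xh) \<noteq> None"
    and "risk_det D f_det = alpha"
    and "adv_det_risk D d eps f_det = beta"
  shows "\<forall>r \<in> {1..C}.
           risk_clf D (clf_of_det d eps f_det g r) \<le> alpha \<and>
           adv_risk_clf D d (eps / 2) (clf_of_det d eps f_det g r) \<le> beta"
proof (intro ballI conjI)
  fix r :: nat
  assume r: "r \<in> {1..C}"
  let ?f = "clf_of_det d eps f_det g r"
  have com: "\<And>x y. d x y = d y x" and tri: "\<And>x y z. d x z \<le> d x y + d y z"
    using assms(4) by (auto simp: Metric_space_def)
  have z: "\<And>x. d x x = 0" using assms(4) by (auto simp: Metric_space_def)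
  have pw1: "\<And>x y. ?f x \<noteq> y \<Longrightarrow> f_det x \<noteq> Some y"
    by (auto simp: clf_of_det_def split: option.splits)
  show "risk_clf D ?f \<le> alpha"
    unfolding assms(8)[symmetric] risk_clf_def risk_det_def
    by (intro nn_integral_mono) (auto split: split_indicator dest: pw1)
  have pw2: "\<exists>xh'. d x xh' \<le> eps \<and> (f_det x \<noteq> Some y \<or> f_det xh' \<notin> {Some y, None})"
    if h: "d x xh \<le> eps / 2" "?f xh \<noteq> y" for x xh y
  proof (cases "f_det x = Some y")
    case False
    then show ?thesis using h assms(5) by (intro exI[of _ x]) (auto simp: z)
  next
    case True
    show ?thesis
    proof (cases "f_det xh")
      case (Some c)
      then show ?thesis using h assms(5) by (intro exI[of _ xh]) (auto simp: clf_of_det_def)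
    next
      case None
      have ex: "\<exists>x'. d xh x' \<le> eps / 2 \<and> f_det x' \<noteq> None"
        using h True com[of xh x] by (intro exI[of _ x]) auto
      from assms(7)[OF ex] have g1: "d xh (g xh) \<le> eps / 2" "f_det (g xh) \<noteq> None" by auto
      have fv: "?f xh = the (f_det (g xh))" using None ex by (simp add: clf_of_det_def)
      have "d x (g xh) \<le> eps" using tri[where x=x and y=xh and z="g xh"] h(1) g1(1) by linarith
      moreover have "f_det (g xh) \<notin> {Some y, None}" using g1(2) fv h(2) by auto
      ultimately show ?thesis by blast
    qed
  qed
  show "adv_risk_clf D d (eps / 2) ?f \<le> beta"
    unfolding assms(9)[symmetric] adv_risk_clf_def adv_det_risk_def
  proof (intro nn_integral_mono)
    fix z assume "z \<in> space D"
    obtain x y where zz: "z = (x, y)" by (cases z)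
    show "indicator {(x, y). \<exists>xh. d x xh \<le> eps / 2 \<and> ?f xh \<noteq> y} z
      \<le> (indicator {(x, y). \<exists>xh. d x xh \<le> eps \<and> (f_det x \<noteq> Some y \<or> f_det xh \<notin> {Some y, None})} z :: ennreal)"
    proof (cases "\<exists>xh. d x xh \<le> eps / 2 \<and> ?f xh \<noteq> y")
      case True
      then obtain xh where "d x xh \<le> eps / 2" "?f xh \<noteq> y" by blast
      from pw2[OF this] show ?thesis by (simp add: zz indicator_def)
    next
      case False
      then have "z \<notin> {(x, y). \<exists>xh. d x xh \<le> eps / 2 \<and> ?f xh \<noteq> y}" by (simp add: zz)
      then show ?thesis by simp
    qed
  qed
qed

end
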